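(* If $\mathcal{A}$ is a strong $T_0$-family, then every nonseparable closed linear subspace of $\mathcal{X}_\mathcal{A}$ contains a subspace isomorphic to $\ell_2$.
   Context: $c_{00}(\omega_1)$ is the set of finitely supported $x\in\mathbb{R}^{\omega_1}$; $\|x\|_\mathcal{A}=\sup_{A\in\mathcal{A}}\sqrt{\sum_{\alpha\in A}x(\alpha)^2}$ and $\mathcal{X}_\mathcal{A}$ is the closure of $c_{00}(\omega_1)$ in $\{x\in\mathbb{R}^{\omega_1}:\|x\|_\mathcal{A}<\infty\}$. For disjoint $A,B$, $A\otimes B=\{\{\alpha,\beta\}:\alpha\in A,\beta\in B\}$. A function $c=(c_0,c_1):[\omega_1]^2\to I\times J$ ($0,1\in I$, $J\ne\emptyset$) is a $T$-coloring if for every uncountable pairwise disjoint family $\{\{a_\xi(0),a_\xi(1)\}:\xi<\omega_1\}$ of pairs and all $(i_0,j_0),(i_1,j_1)\in I\times J$ there are $\xi<\eta$ with $c(\{a_\xi(0),a_\eta(0)\})=(i_0,j_0)$, $c(\{a_\xi(1),a_\eta(1)\})=(i_1,j_1)$; it is a strong $T$-coloring if moreover for every uncountable pairwise disjoint family $\{A_\xi:\xi<\omega_1\}$ of finite subsets of $\omega_1$ there are $\xi<\eta$ with $c_0[A_\xi\otimes A_\eta]=\{0\}$ and $\xi<\eta$ with $c_0[A_\xi\otimes A_\eta]=\{1\}$. A strong $T_0$-family is $\mathcal{A}_c=\{a\subseteq\omega_1\text{ finite}:c_0[[a]^2]\subseteq\{0\}\}$ for a strong $T$-coloring $c$. *)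

theory Defs
  imports Complex_Main "HOL-Library.Countable_Set"
begin

text \<open>omega_1 is modelled by a well-ordered type 'a that is uncountable and all of
whose proper initial segments are countable (i.e. its order type is omega_1).
Unordered pairs {alpha,beta} are represented as two-element sets.\<close>

definition is_omega1 :: "'a::wellorder itself \<Rightarrow> bool" where
  "is_omega1 _ \<longleftrightarrow> \<not> countable (UNIV :: 'a set) \<and> (\<forall>\<alpha>::'a. countable {..<\<alpha>})"

definition pairs2 :: "'a set \<Rightarrow> 'a set set" where
  "pairs2 a = {{\<alpha>, \<beta>} | \<alpha> \<beta>. \<alpha> \<in> a \<and> \<beta> \<in> a \<and> \<alpha> \<noteq> \<beta>}"

definition otimes :: "'a set \<Rightarrow> 'a set \<Rightarrow> 'a set set" where
  "otimes A B = {{\<alpha>, \<beta>} | \<alpha> \<beta>. \<alpha> \<in> A \<and> \<beta> \<in> B}"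

text \<open>T-coloring c = (c0, c1) : [omega_1]^2 \<rightarrow> I \<times> J, with c0 = fst \<circ> c.\<close>
definition T_coloring :: "('a::wellorder set \<Rightarrow> 'i::zero_neq_one \<times> 'j) \<Rightarrow> 'i set \<Rightarrow> 'j set \<Rightarrow> bool" where
  "T_coloring c I J \<longleftrightarrow>
     0 \<in> I \<and> 1 \<in> I \<and> J \<noteq> {} \<and>
     (\<forall>p \<in> pairs2 (UNIV :: 'a set). c p \<in> I \<times> J) \<and>
     (\<forall>a0 a1 :: 'a \<Rightarrow> 'a.
        (\<forall>\<xi>. a0 \<xi> \<noteq> a1 \<xi>) \<and>
        (\<forall>\<xi> \<eta>. \<xi> \<noteq> \<eta> \<longrightarrow> {a0 \<xi>, a1 \<xi>} \<inter> {a0 \<eta>, a1 \<eta>} = {}) \<longrightarrow>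
        (\<forall>i0 \<in> I. \<forall>j0 \<in> J. \<forall>i1 \<in> I. \<forall>j1 \<in> J.
           \<exists>\<xi> \<eta>. \<xi> < \<eta> \<and> c {a0 \<xi>, a0 \<eta>} = (i0, j0) \<and> c {a1 \<xi>, a1 \<eta>} = (i1, j1)))"

definition strong_T_coloring :: "('a::wellorder set \<Rightarrow> 'i::zero_neq_one \<times> 'j) \<Rightarrow> 'i set \<Rightarrow> 'j set \<Rightarrow> bool" where
  "strong_T_coloring c I J \<longleftrightarrow>
     T_coloring c I J \<and>
     (\<forall>A :: 'a \<Rightarrow> 'a set.
        (\<forall>\<xi>. finite (A \<xi>) \<and> A \<xi> \<noteq> {}) \<and>
        (\<forall>\<xi> \<eta>. \<xi> \<noteq> \<eta> \<longrightarrow> A \<xi> \<inter> A \<eta> = {}) \<longrightarrow>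
        (\<exists>\<xi> \<eta>. \<xi> < \<eta> \<and> (fst \<circ> c) ` otimes (A \<xi>) (A \<eta>) = {0}) \<and>
        (\<exists>\<xi> \<eta>. \<xi> < \<eta> \<and> (fst \<circ> c) ` otimes (A \<xi>) (A \<eta>) = {1}))"

definition T0_family :: "('a set \<Rightarrow> 'i::zero_neq_one \<times> 'j) \<Rightarrow> 'a set set" where
  "T0_family c = {a. finite a \<and> (fst \<circ> c) ` pairs2 a \<subseteq> {0}}"

definition normA :: "'a set set \<Rightarrow> ('a \<Rightarrow> real) \<Rightarrow> real" where
  "normA \<A> x = (SUP a \<in> \<A>. sqrt (\<Sum>\<alpha>\<in>a. (x \<alpha>)^2))"

definition normA_finite :: "'a set set \<Rightarrow> ('a \<Rightarrow> real) \<Rightarrow> bool" where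
  "normA_finite \<A> x \<longleftrightarrow> bdd_above ((\<lambda>a. sqrt (\<Sum>\<alpha>\<in>a. (x \<alpha>)^2)) ` \<A>)"

definition c00 :: "('a \<Rightarrow> real) set" where
  "c00 = {x. finite {\<alpha>. x \<alpha> \<noteq> 0}}"

definition XA :: "'a set set \<Rightarrow> ('a \<Rightarrow> real) set" where
  "XA \<A> = {x. normA_finite \<A> x \<and>
              (\<forall>e>0. \<exists>y \<in> c00. normA \<A> (\<lambda>\<alpha>. x \<alpha> - y \<alpha>) < e)}"

definition closed_subspace_XA :: "'a set set \<Rightarrow> ('a \<Rightarrow> real) set \<Rightarrow> bool" where
  "closed_subspace_XA \<A> Z \<longleftrightarrow>
     Z \<subseteq> XA \<A> \<and> (\<lambda>\<alpha>. 0) \<in> Z \<and>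
     (\<forall>x\<in>Z. \<forall>y\<in>Z. (\<lambda>\<alpha>. x \<alpha> + y \<alpha>) \<in> Z) \<and>
     (\<forall>r::real. \<forall>x\<in>Z. (\<lambda>\<alpha>. r * x \<alpha>) \<in> Z) \<and>
     (\<forall>x \<in> XA \<A>. (\<forall>e>0. \<exists>z\<in>Z. normA \<A> (\<lambda>\<alpha>. x \<alpha> - z \<alpha>) < e) \<longrightarrow> x \<in> Z)"

definition separable_XA :: "'a set set \<Rightarrow> ('a \<Rightarrow> real) set \<Rightarrow> bool" where
  "separable_XA \<A> Z \<longleftrightarrow>
     (\<exists>D \<subseteq> Z. countable D \<and> (\<forall>z\<in>Z. \<forall>e>0. \<exists>d\<in>D. normA \<A> (\<lambda>\<alpha>. z \<alpha> - d \<alpha>) < e))"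

definition l2 :: "(nat \<Rightarrow> real) set" where
  "l2 = {f. summable (\<lambda>n. (f n)^2)}"

definition l2_norm :: "(nat \<Rightarrow> real) \<Rightarrow> real" where
  "l2_norm f = sqrt (\<Sum>n. (f n)^2)"

definition contains_l2 :: "'a set set \<Rightarrow> ('a \<Rightarrow> real) set \<Rightarrow> bool" where
  "contains_l2 \<A> Z \<longleftrightarrow>
     (\<exists>(T :: (nat \<Rightarrow> real) \<Rightarrow> ('a \<Rightarrow> real)) m M.
        0 < m \<and> 0 < M \<and> T ` l2 \<subseteq> Z \<and>
        (\<forall>f\<in>l2. \<forall>g\<in>l2. T (\<lambda>n. f n + g n) = (\<lambda>\<alpha>. T f \<alpha> + T g \<alpha>)) \<and>
        (\<forall>r::real. \<forall>f\<in>l2. T (\<lambda>n. r * f n) = (\<lambda>\<alpha>. r * T f \<alpha>)) \<and>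
        (\<forall>f\<in>l2. m * l2_norm f \<le> normA \<A> (T f) \<and> normA \<A> (T f) \<le> M * l2_norm f))"

end

theory Submission
  imports Defs "HOL-Analysis.L2_Norm"
begin

definition sqs :: "'a set \<Rightarrow> ('a \<Rightarrow> real) \<Rightarrow> real" where
  "sqs a x = (\<Sum>\<alpha>\<in>a. (x \<alpha>)^2)"

lemma sqs_nonneg: "0 \<le> sqs a x"
  unfolding sqs_def by (simp add: sum_nonneg)

lemma sqrt_sqs: "sqrt (sqs a x) = L2_set x a"
  unfolding sqs_def L2_set_def by simp

lemma normA_alt: "normA \<A> x = (SUP a \<in> \<A>. L2_set x a)"
  unfolding normA_def L2_set_def by simp

lemma normA_finite_alt: "normA_finite \<A> x \<longleftrightarrow> bdd_above ((\<lambda>a. L2_set x a) ` \<A>)"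
  unfolding normA_finite_def L2_set_def by simp

lemma normA_leI:
  assumes "\<A> \<noteq> {}" "\<And>a. a \<in> \<A> \<Longrightarrow> L2_set x a \<le> B"
  shows "normA \<A> x \<le> B" "normA_finite \<A> x"
proof -
  show "normA \<A> x \<le> B" unfolding normA_alt using assms by (intro cSUP_least) auto
  show "normA_finite \<A> x" unfolding normA_finite_alt bdd_above_def using assms(2) by blast
qed

lemma normA_finiteI:
  assumes "\<And>a. a \<in> \<A> \<Longrightarrow> L2_set x a \<le> B"
  shows "normA_finite \<A> x"
  unfolding normA_finite_alt bdd_above_def using assms by blast

lemma normA_geI:
  assumes "normA_finite \<A> x" "a \<in> \<A>"
  shows "L2_set x a \<le> normA \<A> x"
  using assms unfolding normA_alt normA_finite_alt by (intro cSUP_upper) auto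

lemma normA_sqs:
  assumes "normA_finite \<A> x" "a \<in> \<A>"
  shows "sqs a x \<le> (normA \<A> x)^2"
proof -
  have "sqrt (sqs a x) \<le> normA \<A> x" using normA_geI[OF assms] sqrt_sqs by metis
  then show ?thesis using sqs_nonneg real_le_lsqrt
    by (metis real_sqrt_ge_zero real_sqrt_le_iff real_sqrt_pow2 power2_le_iff_abs_le abs_of_nonneg order_trans)
qed

lemma normA_nonneg:
  assumes "normA_finite \<A> x" "\<A> \<noteq> {}"
  shows "0 \<le> normA \<A> x"
proof -
  obtain a where "a \<in> \<A>" using assms by auto
  then show ?thesis using normA_geI[OF assms(1)] L2_set_nonneg order_trans by metis
qed

lemma normA_add:
  assumes "\<A> \<noteq> {}" "normA_finite \<A> x" "normA_finite \<A> y"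
  shows "normA \<A> (\<lambda>\<alpha>. x \<alpha> + y \<alpha>) \<le> normA \<A> x + normA \<A> y"
    "normA_finite \<A> (\<lambda>\<alpha>. x \<alpha> + y \<alpha>)"
proof -
  have le: "L2_set (\<lambda>\<alpha>. x \<alpha> + y \<alpha>) a \<le> normA \<A> x + normA \<A> y" if "a \<in> \<A>" for a
    using L2_set_triangle_ineq[of x y a] normA_geI[OF assms(2) that] normA_geI[OF assms(3) that]
    by linarith
  show "normA \<A> (\<lambda>\<alpha>. x \<alpha> + y \<alpha>) \<le> normA \<A> x + normA \<A> y"
    by (rule normA_leI(1)[OF assms(1)]) (rule le)
  show "normA_finite \<A> (\<lambda>\<alpha>. x \<alpha> + y \<alpha>)" by (rule normA_finiteI) (rule le)
qed

lemma L2_set_scale: "L2_set (\<lambda>\<alpha>. r * x \<alpha>) a = \<bar>r\<bar> * L2_set x a"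
  unfolding L2_set_def by (simp add: power_mult_distrib sum_distrib_left[symmetric] real_sqrt_mult)

lemma normA_scale:
  assumes "\<A> \<noteq> {}" "normA_finite \<A> x"
  shows "normA \<A> (\<lambda>\<alpha>. r * x \<alpha>) = \<bar>r\<bar> * normA \<A> x"
    "normA_finite \<A> (\<lambda>\<alpha>. r * x \<alpha>)"
proof -
  have le: "L2_set (\<lambda>\<alpha>. r * x \<alpha>) a \<le> \<bar>r\<bar> * normA \<A> x" if "a \<in> \<A>" for a
    using normA_geI[OF assms(2) that] by (simp add: L2_set_scale mult_left_mono)
  then show fin: "normA_finite \<A> (\<lambda>\<alpha>. r * x \<alpha>)" by (rule normA_finiteI)
  have 1: "normA \<A> (\<lambda>\<alpha>. r * x \<alpha>) \<le> \<bar>r\<bar> * normA \<A> x" using le normA_leI[OF assms(1)] by auto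
  show "normA \<A> (\<lambda>\<alpha>. r * x \<alpha>) = \<bar>r\<bar> * normA \<A> x"
  proof (cases "r = 0")
    case True
    then show ?thesis using 1 normA_nonneg[OF fin assms(1)] by simp
  next
    case False
    have "L2_set x a \<le> normA \<A> (\<lambda>\<alpha>. r * x \<alpha>) / \<bar>r\<bar>" if "a \<in> \<A>" for a
      using normA_geI[OF fin that] False by (simp add: L2_set_scale field_simps)
    then have "normA \<A> x \<le> normA \<A> (\<lambda>\<alpha>. r * x \<alpha>) / \<bar>r\<bar>" using normA_leI[OF assms(1)] by auto
    then show ?thesis using 1 False by (simp add: field_simps)
  qed
qed

lemma normA_diff:
  assumes "\<A> \<noteq> {}" "normA_finite \<A> x" "normA_finite \<A> y"
  shows "normA \<A> (\<lambda>\<alpha>. x \<alpha> - y \<alpha>) \<le> normA \<A> x + normA \<A> y"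
    "normA_finite \<A> (\<lambda>\<alpha>. x \<alpha> - y \<alpha>)"
proof -
  have f: "normA_finite \<A> (\<lambda>\<alpha>. (-1) * y \<alpha>)" and e: "normA \<A> (\<lambda>\<alpha>. (-1) * y \<alpha>) = normA \<A> y"
    using normA_scale[OF assms(1,3), of "-1"] by auto
  show "normA \<A> (\<lambda>\<alpha>. x \<alpha> - y \<alpha>) \<le> normA \<A> x + normA \<A> y"
    "normA_finite \<A> (\<lambda>\<alpha>. x \<alpha> - y \<alpha>)"
    using normA_add[OF assms(1,2) f] e by auto
qed

lemma normA_diff_sym: "normA \<A> (\<lambda>\<alpha>. x \<alpha> - y \<alpha>) = normA \<A> (\<lambda>\<alpha>. y \<alpha> - x \<alpha>)"
proof -
  have "L2_set (\<lambda>\<alpha>. x \<alpha> - y \<alpha>) = L2_set (\<lambda>\<alpha>. y \<alpha> - x \<alpha>)"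
    unfolding L2_set_def by (intro ext) (simp add: power2_commute)
  then show ?thesis unfolding normA_alt by simp
qed

lemma normA_finite_diff_sym: "normA_finite \<A> (\<lambda>\<alpha>. x \<alpha> - y \<alpha>) = normA_finite \<A> (\<lambda>\<alpha>. y \<alpha> - x \<alpha>)"
proof -
  have "L2_set (\<lambda>\<alpha>. x \<alpha> - y \<alpha>) = L2_set (\<lambda>\<alpha>. y \<alpha> - x \<alpha>)"
    unfolding L2_set_def by (intro ext) (simp add: power2_commute)
  then show ?thesis unfolding normA_finite_alt by simp
qed

lemma T0_empty: "{} \<in> T0_family c"
  unfolding T0_family_def pairs2_def by auto

lemma T0_ne: "T0_family c \<noteq> {}"
  using T0_empty by auto

lemma T0_single: "{\<alpha>} \<in> T0_family c"
  unfolding T0_family_def pairs2_def by auto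

lemma T0_finite: "a \<in> T0_family c \<Longrightarrow> finite a"
  unfolding T0_family_def by auto

lemma T0_sub: "a \<in> T0_family c \<Longrightarrow> b \<subseteq> a \<Longrightarrow> b \<in> T0_family c"
  unfolding T0_family_def pairs2_def by (auto intro: finite_subset) (blast)

lemma T0_iff: "a \<in> T0_family c \<longleftrightarrow> finite a \<and> (\<forall>x\<in>a. \<forall>y\<in>a. x \<noteq> y \<longrightarrow> fst (c {x, y}) = 0)"
  unfolding T0_family_def pairs2_def by auto

lemma T0_union:
  assumes "a \<in> T0_family c" "b \<in> T0_family c"
    "\<And>x y. x \<in> a \<Longrightarrow> y \<in> b \<Longrightarrow> x \<noteq> y \<Longrightarrow> fst (c {x, y}) = 0"
  shows "a \<union> b \<in> T0_family c"
  using assms unfolding T0_iff by (metis Un_iff finite_Un insert_commute)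

lemma L2_set_single: "L2_set x {\<alpha>} = \<bar>x \<alpha>\<bar>"
  unfolding L2_set_def by simp

lemma normA_point:
  assumes "normA_finite (T0_family c) x"
  shows "\<bar>x \<alpha>\<bar> \<le> normA (T0_family c) x"
  using normA_geI[OF assms T0_single] L2_set_single by metis

lemma c00_bounded:
  assumes "y \<in> c00"
  shows "normA_finite \<A> y"
proof -
  let ?F = "{\<alpha>. y \<alpha> \<noteq> 0}"
  have fin: "finite ?F" using assms unfolding c00_def by auto
  have "L2_set y a \<le> L2_set y ?F" for a
  proof (cases "finite a")
    case True
    have "(\<Sum>i\<in>a. (y i)\<^sup>2) = (\<Sum>i\<in>a \<inter> ?F. (y i)\<^sup>2)"
      using True by (intro sum.mono_neutral_right) auto
    also have "\<dots> \<le> (\<Sum>i\<in>?F. (y i)\<^sup>2)"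
      using fin by (intro sum_mono2) auto
    finally show ?thesis unfolding L2_set_def by simp
  next
    case False
    then show ?thesis by simp
  qed
  then show ?thesis by (rule normA_finiteI)
qed

lemma XA_bounded: "x \<in> XA \<A> \<Longrightarrow> normA_finite \<A> x"
  unfolding XA_def by auto

lemma XA_approx: "x \<in> XA \<A> \<Longrightarrow> e > 0 \<Longrightarrow> \<exists>y\<in>c00. normA \<A> (\<lambda>\<alpha>. x \<alpha> - y \<alpha>) < e"
  unfolding XA_def by auto

definition proj :: "'a set \<Rightarrow> ('a \<Rightarrow> real) \<Rightarrow> ('a \<Rightarrow> real)" where
  "proj S x = (\<lambda>\<alpha>. if \<alpha> \<in> S then x \<alpha> else 0)"

lemma L2_set_proj: "finite a \<Longrightarrow> L2_set (proj S x) a = L2_set x (a \<inter> S)"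
  unfolding L2_set_def proj_def
  by (simp add: sum.inter_restrict if_distrib[of "\<lambda>t. t^2"] cong: if_cong)

lemma normA_proj:
  assumes "normA_finite (T0_family c) x"
  shows "normA_finite (T0_family c) (proj S x)" "normA (T0_family c) (proj S x) \<le> normA (T0_family c) x"
proof -
  have le: "L2_set (proj S x) a \<le> normA (T0_family c) x" if "a \<in> T0_family c" for a
    using L2_set_proj[OF T0_finite[OF that]] normA_geI[OF assms T0_sub[OF that]] by auto
  show "normA_finite (T0_family c) (proj S x)" by (rule normA_finiteI) (rule le)
  show "normA (T0_family c) (proj S x) \<le> normA (T0_family c) x"
    by (rule normA_leI(1)[OF T0_ne]) (rule le)
qed

lemma XA_countable_support:
  assumes "x \<in> XA (T0_family c)"
  shows "countable {\<alpha>. x \<alpha> \<noteq> 0}"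
proof -
  let ?A = "T0_family c"
  have "\<exists>y\<in>c00. normA ?A (\<lambda>\<alpha>. x \<alpha> - y \<alpha>) < 1 / (Suc n)" for n
    using assms unfolding XA_def by auto
  then obtain y where y: "\<And>n. y n \<in> c00" "\<And>n. normA ?A (\<lambda>\<alpha>. x \<alpha> - y n \<alpha>) < 1 / (Suc n)"
    by metis
  have "{\<alpha>. x \<alpha> \<noteq> 0} \<subseteq> (\<Union>n. {\<alpha>. y n \<alpha> \<noteq> 0})"
  proof
    fix \<alpha> assume "\<alpha> \<in> {\<alpha>. x \<alpha> \<noteq> 0}"
    then have "\<bar>x \<alpha>\<bar> > 0" by auto
    then obtain n where n: "1 / real (Suc n) < \<bar>x \<alpha>\<bar>"
      by (metis reals_Archimedean inverse_eq_divide of_nat_Suc)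
    have "normA_finite ?A (\<lambda>\<alpha>. x \<alpha> - y n \<alpha>)"
      using normA_diff(2)[OF T0_ne XA_bounded[OF assms] c00_bounded[OF y(1)]] .
    then have "\<bar>x \<alpha> - y n \<alpha>\<bar> < \<bar>x \<alpha>\<bar>"
      using normA_point[of c "\<lambda>\<alpha>. x \<alpha> - y n \<alpha>" \<alpha>] y(2)[of n] n by simp
    then show "\<alpha> \<in> (\<Union>n. {\<alpha>. y n \<alpha> \<noteq> 0})" by (cases "y n \<alpha> = 0") auto
  qed
  moreover have "countable (\<Union>n. {\<alpha>. y n \<alpha> \<noteq> 0})"
    using y(1) unfolding c00_def by (auto intro: countable_finite)
  ultimately show ?thesis by (rule countable_subset)
qed

lemma dense_proj:
  fixes S :: "'a set"
  defines "D0 \<equiv> (\<lambda>xs. \<lambda>\<alpha>. case map_of xs \<alpha> of None \<Rightarrow> 0 | Some q \<Rightarrow> real_of_rat q) ` lists (S \<times> (UNIV::rat set))"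
  assumes cS: "countable S"
  shows "countable D0" "\<And>d. d \<in> D0 \<Longrightarrow> d \<in> c00"
    "\<And>x e. x \<in> XA (T0_family c) \<Longrightarrow> e > 0 \<Longrightarrow> \<exists>d\<in>D0. normA (T0_family c) (\<lambda>\<alpha>. proj S x \<alpha> - d \<alpha>) < e"
proof -
  let ?A = "T0_family c"
  have "countable (S \<times> (UNIV::rat set))" using cS by auto
  then show "countable D0" unfolding D0_def by auto
  show c0: "d \<in> c00" if "d \<in> D0" for d
  proof -
    obtain xs where d: "d = (\<lambda>\<alpha>. case map_of xs \<alpha> of None \<Rightarrow> 0 | Some q \<Rightarrow> real_of_rat q)"
      using \<open>d \<in> D0\<close> unfolding D0_def by auto
    have "{\<alpha>. d \<alpha> \<noteq> 0} \<subseteq> fst ` set xs"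
      unfolding d by (auto split: option.splits) (metis map_of_eq_None_iff option.distinct(1))
    then show ?thesis unfolding c00_def by (auto intro: finite_subset)
  qed
  fix x :: "'a \<Rightarrow> real" and e :: real
  assume x: "x \<in> XA ?A" and e: "e > 0"
  obtain y where y: "y \<in> c00" "normA ?A (\<lambda>\<alpha>. x \<alpha> - y \<alpha>) < e / 2"
    using XA_approx[OF x, of "e/2"] e by auto
  define F where "F = {\<alpha>\<in>S. y \<alpha> \<noteq> 0}"
  have finF: "finite F" using y(1) unfolding c00_def F_def by (auto intro: finite_subset)
  define \<eta> where "\<eta> = e / (4 * (card F + 1))"
  have eta: "\<eta> > 0" using e unfolding \<eta>_def by auto
  have "\<exists>q::rat. \<bar>y \<alpha> - real_of_rat q\<bar> < \<eta>" for \<alpha>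
  proof -
    obtain q where "y \<alpha> - \<eta> < real_of_rat q" "real_of_rat q < y \<alpha> + \<eta>"
      using of_rat_dense[of "y \<alpha> - \<eta>" "y \<alpha> + \<eta>"] eta by auto
    then show ?thesis by (intro exI[of _ q]) auto
  qed
  then obtain q where q: "\<And>\<alpha>. \<bar>y \<alpha> - real_of_rat (q \<alpha>)\<bar> < \<eta>" by metis
  obtain ks where ks: "set ks = F" using finite_list[OF finF] by auto
  define xs where "xs = map (\<lambda>k. (k, q k)) ks"
  define d where "d = (\<lambda>\<alpha>. case map_of xs \<alpha> of None \<Rightarrow> 0 | Some q \<Rightarrow> real_of_rat q)"
  have dF: "d \<alpha> = (if \<alpha> \<in> F then real_of_rat (q \<alpha>) else 0)" for \<alpha>
    unfolding d_def xs_def map_of_map_restrict ks by (auto simp: restrict_map_def)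
  have "d \<in> D0" unfolding D0_def d_def xs_def using ks F_def by auto
  have dd: "\<bar>proj S y \<alpha> - d \<alpha>\<bar> \<le> (if \<alpha> \<in> F then \<eta> else 0)" for \<alpha>
    using q[of \<alpha>] by (auto simp: dF proj_def F_def)
  have b2: "L2_set (\<lambda>\<alpha>. proj S y \<alpha> - d \<alpha>) a \<le> e / 4" if "a \<in> ?A" for a
  proof -
    have fa: "finite a" using T0_finite[OF that] .
    have "(\<Sum>i\<in>a. (proj S y i - d i)\<^sup>2) \<le> (\<Sum>i\<in>a. (if i \<in> F then \<eta> else 0)\<^sup>2)"
    proof (intro sum_mono)
      fix i
      have "\<bar>proj S y i - d i\<bar> \<le> \<bar>if i \<in> F then \<eta> else 0\<bar>" using dd[of i] eta by auto
      then show "(proj S y i - d i)\<^sup>2 \<le> (if i \<in> F then \<eta> else 0)\<^sup>2"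
        using abs_le_square_iff by blast
    qed
    also have "\<dots> = (\<Sum>i\<in>a \<inter> F. \<eta>\<^sup>2)"
      using fa sum.inter_restrict[OF fa, of "\<lambda>_. \<eta>\<^sup>2" F] by (simp add: if_distrib[of "\<lambda>t. t^2"] cong: if_cong)
    also have "\<dots> \<le> (\<Sum>i\<in>F. \<eta>\<^sup>2)" using finF by (intro sum_mono2) auto
    also have "\<dots> = card F * \<eta>\<^sup>2" by simp
    also have "\<dots> \<le> ((card F + 1) * \<eta>)\<^sup>2"
    proof -
      have "real (card F) \<le> (real (card F) + 1)\<^sup>2" by (simp add: power2_eq_square algebra_simps)
      then show ?thesis by (simp add: power_mult_distrib add.commute mult_right_mono)
    qed
    also have "\<dots> = (e/4)\<^sup>2"
    proof -
      have "(card F + 1) * \<eta> = e / 4" unfolding \<eta>_def by (simp add: field_simps)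
      then show ?thesis by (metis of_nat_Suc add.commute)
    qed
    finally show ?thesis unfolding L2_set_def using e by (intro real_le_lsqrt) auto
  qed
  have bd2: "normA_finite ?A (\<lambda>\<alpha>. proj S y \<alpha> - d \<alpha>)" by (rule normA_finiteI) (rule b2)
  have n2: "normA ?A (\<lambda>\<alpha>. proj S y \<alpha> - d \<alpha>) \<le> e / 4" by (rule normA_leI(1)[OF T0_ne]) (rule b2)
  have bd1: "normA_finite ?A (\<lambda>\<alpha>. x \<alpha> - y \<alpha>)"
    using normA_diff(2)[OF T0_ne XA_bounded[OF x] c00_bounded[OF y(1)]] .
  have eq1: "proj S (\<lambda>\<alpha>. x \<alpha> - y \<alpha>) = (\<lambda>\<alpha>. proj S x \<alpha> - proj S y \<alpha>)"
    unfolding proj_def by auto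
  have n1: "normA ?A (proj S (\<lambda>\<alpha>. x \<alpha> - y \<alpha>)) < e / 2"
    using normA_proj(2)[OF bd1, of S] y(2) by linarith
  have eq: "(\<lambda>\<alpha>. proj S x \<alpha> - d \<alpha>) = (\<lambda>\<alpha>. proj S (\<lambda>\<alpha>. x \<alpha> - y \<alpha>) \<alpha> + (proj S y \<alpha> - d \<alpha>))"
    unfolding proj_def by auto
  have "normA ?A (\<lambda>\<alpha>. proj S x \<alpha> - d \<alpha>) \<le> normA ?A (proj S (\<lambda>\<alpha>. x \<alpha> - y \<alpha>)) + normA ?A (\<lambda>\<alpha>. proj S y \<alpha> - d \<alpha>)"
    unfolding eq by (rule normA_add(1)[OF T0_ne normA_proj(1)[OF bd1] bd2])
  then show "\<exists>d\<in>D0. normA ?A (\<lambda>\<alpha>. proj S x \<alpha> - d \<alpha>) < e"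
    using n1 n2 e \<open>d \<in> D0\<close> by (intro bexI[of _ d]) auto
qed

lemma cs_XA: "closed_subspace_XA \<A> Z \<Longrightarrow> z \<in> Z \<Longrightarrow> z \<in> XA \<A>"
  unfolding closed_subspace_XA_def by auto
lemma cs_add: "closed_subspace_XA \<A> Z \<Longrightarrow> x \<in> Z \<Longrightarrow> y \<in> Z \<Longrightarrow> (\<lambda>\<alpha>. x \<alpha> + y \<alpha>) \<in> Z"
  unfolding closed_subspace_XA_def by auto
lemma cs_scale: "closed_subspace_XA \<A> Z \<Longrightarrow> x \<in> Z \<Longrightarrow> (\<lambda>\<alpha>. r * x \<alpha>) \<in> Z"
  unfolding closed_subspace_XA_def by auto
lemma cs_zero: "closed_subspace_XA \<A> Z \<Longrightarrow> (\<lambda>\<alpha>. 0) \<in> Z"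
  unfolding closed_subspace_XA_def by auto
lemma cs_diff: "closed_subspace_XA \<A> Z \<Longrightarrow> x \<in> Z \<Longrightarrow> y \<in> Z \<Longrightarrow> (\<lambda>\<alpha>. x \<alpha> - y \<alpha>) \<in> Z"
  using cs_add[of \<A> Z x "\<lambda>\<alpha>. (-1) * y \<alpha>"] cs_scale[of \<A> Z y "-1"] by simp
lemma cs_closed: "closed_subspace_XA \<A> Z \<Longrightarrow> x \<in> XA \<A> \<Longrightarrow> (\<And>e. e > 0 \<Longrightarrow> \<exists>z\<in>Z. normA \<A> (\<lambda>\<alpha>. x \<alpha> - z \<alpha>) < e) \<Longrightarrow> x \<in> Z"
  unfolding closed_subspace_XA_def by auto

lemma exists_small:
  assumes cs: "closed_subspace_XA (T0_family c) Z"
    and ns: "\<not> separable_XA (T0_family c) Z"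
    and cS: "countable S" and dp: "\<delta> > 0"
  shows "\<exists>z\<in>Z. normA (T0_family c) z = 1 \<and> (\<forall>a\<in>T0_family c. L2_set z (a \<inter> S) \<le> \<delta>)"
proof (rule ccontr)
  let ?A = "T0_family c"
  assume "\<not> ?thesis"
  then have H: "\<And>z. z \<in> Z \<Longrightarrow> normA ?A z = 1 \<Longrightarrow> \<exists>a\<in>?A. L2_set z (a \<inter> S) > \<delta>"
    by (auto simp: not_le)
  have bdZ: "normA_finite ?A z" if "z \<in> Z" for z using XA_bounded[OF cs_XA[OF cs that]] .
  have claim1: "\<delta> * normA ?A y \<le> normA ?A (proj S y)" if y: "y \<in> Z" for y
  proof -
    define N where "N = normA ?A y"
    have N0: "N \<ge> 0" unfolding N_def using normA_nonneg[OF bdZ[OF y] T0_ne] .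
    have P0: "0 \<le> normA ?A (proj S y)" using normA_nonneg[OF normA_proj(1)[OF bdZ[OF y]] T0_ne] .
    show ?thesis
    proof (cases "N = 0")
      case True
      then show ?thesis using P0 unfolding N_def by simp
    next
      case False
      then have Np: "N > 0" using N0 by auto
      define w where "w = (\<lambda>\<alpha>. (1 / N) * y \<alpha>)"
      have wZ: "w \<in> Z" unfolding w_def using cs_scale[OF cs y] .
      have "normA ?A w = 1" unfolding w_def using normA_scale(1)[OF T0_ne bdZ[OF y], of "1/N"] Np
        unfolding N_def by simp
      then obtain a where a: "a \<in> ?A" "L2_set w (a \<inter> S) > \<delta>" using H[OF wZ] by auto
      have "L2_set w (a \<inter> S) = L2_set (proj S w) a" using L2_set_proj[OF T0_finite[OF a(1)]] by simp
      also have "\<dots> \<le> normA ?A (proj S w)" using normA_geI[OF normA_proj(1)[OF bdZ[OF wZ]] a(1)] .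
      also have "proj S w = (\<lambda>\<alpha>. (1 / N) * proj S y \<alpha>)" unfolding proj_def w_def by auto
      also have "normA ?A \<dots> = (1 / N) * normA ?A (proj S y)"
        using normA_scale(1)[OF T0_ne normA_proj(1)[OF bdZ[OF y]], of "1/N"] Np by simp
      finally have "\<delta> < (1 / N) * normA ?A (proj S y)" using a(2) by linarith
      then show ?thesis using Np unfolding N_def[symmetric] by (simp add: field_simps)
    qed
  qed
  define D0 where "D0 = (\<lambda>xs. \<lambda>\<alpha>. case map_of xs \<alpha> of None \<Rightarrow> 0 | Some q \<Rightarrow> real_of_rat q) ` lists (S \<times> (UNIV::rat set))"
  note dp0 = dense_proj[OF cS, folded D0_def]
  define good where "good = (\<lambda>(d, n::nat) z. z \<in> Z \<and> normA ?A (\<lambda>\<alpha>. proj S z \<alpha> - d \<alpha>) < 1 / Suc n)"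
  define I where "I = {p. fst p \<in> D0 \<and> (\<exists>z. good p z)}"
  define D' where "D' = (\<lambda>p. SOME z. good p z) ` I"
  have cI: "countable I"
  proof -
    have "I \<subseteq> D0 \<times> UNIV" unfolding I_def by auto
    moreover have "countable (D0 \<times> (UNIV :: nat set))" using dp0(1) by auto
    ultimately show ?thesis by (rule countable_subset)
  qed
  have cD': "countable D'" unfolding D'_def using cI by auto
  have gD': "good p (SOME z. good p z)" if "p \<in> I" for p
  proof -
    have "\<exists>z. good p z" using that unfolding I_def by (simp only: mem_Collect_eq)
    then obtain z where "good p z" by (elim exE)
    then show ?thesis by (rule someI[of "good p"])
  qed
  have D'Z: "D' \<subseteq> Z" unfolding D'_def using gD' unfolding good_def by auto
  have "separable_XA ?A Z"
    unfolding separable_XA_def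
  proof (intro exI[of _ D'] conjI ballI allI impI)
    show "D' \<subseteq> Z" by (rule D'Z)
    show "countable D'" by (rule cD')
    fix z e assume z: "z \<in> Z" and e: "(e::real) > 0"
    define \<epsilon> where "\<epsilon> = \<delta> * e"
    have ep: "\<epsilon> > 0" unfolding \<epsilon>_def using e dp by auto
    obtain n :: nat where n: "1 / Suc n < \<epsilon> / 2"
      using ep by (metis half_gt_zero reals_Archimedean inverse_eq_divide)
    obtain d where d: "d \<in> D0" "normA ?A (\<lambda>\<alpha>. proj S z \<alpha> - d \<alpha>) < 1 / Suc n"
      using dp0(3)[OF cs_XA[OF cs z], of "1 / Suc n"] by auto
    have gz: "good (d, n) z" unfolding good_def using z d n by auto
    then have pI: "(d, n) \<in> I" unfolding I_def using d by auto
    define z' where "z' = (SOME z. good (d, n) z)"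
    have z'D: "z' \<in> D'" unfolding z'_def D'_def using pI by auto
    have gz': "good (d, n) z'" unfolding z'_def using gD'[OF pI] .
    then have z'Z: "z' \<in> Z" and z'n: "normA ?A (\<lambda>\<alpha>. proj S z' \<alpha> - d \<alpha>) < 1 / Suc n"
      unfolding good_def by auto
    have bdd: "normA_finite ?A d" using c00_bounded[OF dp0(2)[OF d(1)]] .
    have b1: "normA_finite ?A (\<lambda>\<alpha>. proj S z \<alpha> - d \<alpha>)"
      using normA_diff(2)[OF T0_ne normA_proj(1)[OF bdZ[OF z]] bdd] .
    have b2: "normA_finite ?A (\<lambda>\<alpha>. proj S z' \<alpha> - d \<alpha>)"
      using normA_diff(2)[OF T0_ne normA_proj(1)[OF bdZ[OF z'Z]] bdd] .
    have eqp: "proj S (\<lambda>\<alpha>. z \<alpha> - z' \<alpha>) = (\<lambda>\<alpha>. (proj S z \<alpha> - d \<alpha>) - (proj S z' \<alpha> - d \<alpha>))"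
      unfolding proj_def by auto
    have "normA ?A (proj S (\<lambda>\<alpha>. z \<alpha> - z' \<alpha>)) \<le>
        normA ?A (\<lambda>\<alpha>. proj S z \<alpha> - d \<alpha>) + normA ?A (\<lambda>\<alpha>. proj S z' \<alpha> - d \<alpha>)"
      unfolding eqp by (rule normA_diff(1)[OF T0_ne b1 b2])
    also have "\<dots> < \<epsilon>" using d(2) z'n n by linarith
    finally have "\<delta> * normA ?A (\<lambda>\<alpha>. z \<alpha> - z' \<alpha>) < \<delta> * e"
      using claim1[OF cs_diff[OF cs z z'Z]] unfolding \<epsilon>_def by linarith
    then have "normA ?A (\<lambda>\<alpha>. z \<alpha> - z' \<alpha>) < e" using dp by simp
    then show "\<exists>d\<in>D'. normA ?A (\<lambda>\<alpha>. z \<alpha> - d \<alpha>) < e" using z'D by auto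
  qed
  then show False using ns by simp
qed

definition PB :: "('a set \<Rightarrow> 'i::zero_neq_one \<times> 'j) \<Rightarrow> ('a \<Rightarrow> real) set \<Rightarrow> 'a set \<Rightarrow> real \<Rightarrow> ('a \<Rightarrow> real) \<Rightarrow> 'a set \<Rightarrow> bool" where
  "PB c Z S \<delta> z a \<longleftrightarrow> z \<in> Z \<and> normA (T0_family c) z = 1 \<and> (\<forall>b\<in>T0_family c. L2_set z (b \<inter> S) \<le> \<delta>)
     \<and> a \<in> T0_family c \<and> a \<noteq> {} \<and> a \<inter> S = {} \<and> a \<subseteq> {\<alpha>. z \<alpha> \<noteq> 0} \<and> sqs a z \<ge> 1/4"

lemma exists_block:
  assumes cs: "closed_subspace_XA (T0_family c) Z"
    and ns: "\<not> separable_XA (T0_family c) Z"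
    and cS: "countable S" and dp: "\<delta> > 0" "\<delta> \<le> 1/8"
  shows "\<exists>z a. PB c Z S \<delta> z a"
proof -
  let ?A = "T0_family c"
  obtain z where z: "z \<in> Z" "normA ?A z = 1" "\<And>b. b \<in> ?A \<Longrightarrow> L2_set z (b \<inter> S) \<le> \<delta>"
    using exists_small[OF cs ns cS dp(1)] by auto
  have bd: "normA_finite ?A z" using XA_bounded[OF cs_XA[OF cs z(1)]] .
  have "9/10 < (SUP b\<in>?A. L2_set z b)" using z(2) unfolding normA_alt by simp
  then obtain b where b: "b \<in> ?A" "9/10 < L2_set z b"
    using less_cSUP_iff[OF T0_ne bd[unfolded normA_finite_alt]] by auto
  have fb: "finite b" using T0_finite[OF b(1)] .
  have "(9/10)^2 < (L2_set z b)^2" using b(2) by (intro power_strict_mono) auto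
  then have s1: "81/100 < sqs b z" unfolding L2_set_def sqs_def by (simp add: sum_nonneg power2_eq_square)
  have "L2_set z (b \<inter> S) \<le> 1/8" using z(3)[OF b(1)] dp by linarith
  then have "(L2_set z (b \<inter> S))^2 \<le> (1/8)^2" by (intro power_mono) auto
  then have s2: "sqs (b \<inter> S) z \<le> 1/64" unfolding L2_set_def sqs_def by (simp add: sum_nonneg power2_eq_square)
  have "sqs b z = sqs (b \<inter> S) z + sqs (b - S) z"
    unfolding sqs_def using fb by (metis sum.Int_Diff)
  then have s3: "sqs (b - S) z > 1/4" using s1 s2 by linarith
  define a where "a = (b - S) \<inter> {\<alpha>. z \<alpha> \<noteq> 0}"
  have "sqs a z = sqs (b - S) z"
    unfolding sqs_def a_def using fb by (intro sum.mono_neutral_left) auto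
  then have s4: "sqs a z \<ge> 1/4" using s3 by simp
  have aA: "a \<in> ?A" unfolding a_def by (rule T0_sub[OF b(1)]) auto
  have "a \<noteq> {}" using s4 unfolding sqs_def by auto
  then have "PB c Z S \<delta> z a" unfolding PB_def using z aA s4 unfolding a_def by auto
  then show ?thesis by auto
qed

lemma omega1_countable: "is_omega1 TYPE('a::wellorder) \<Longrightarrow> countable {..<(\<xi>::'a)}"
  unfolding is_omega1_def by auto

definition dlt :: "nat \<Rightarrow> real" where "dlt k = 1 / (8 * 2^k)"

lemma construction:
  fixes c :: "'a::wellorder set \<Rightarrow> 'i::zero_neq_one \<times> 'j"
  assumes om: "is_omega1 TYPE('a)"
    and cs: "closed_subspace_XA (T0_family c) Z"
    and ns: "\<not> separable_XA (T0_family c) Z"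
  shows "\<exists>(z :: 'a \<Rightarrow> nat \<Rightarrow> 'a \<Rightarrow> real) a S. (\<forall>\<xi> k. PB c Z (S \<xi>) (dlt k) (z \<xi> k) (a \<xi> k)) \<and>
     (\<forall>\<eta> \<xi> k. \<eta> < \<xi> \<longrightarrow> {\<alpha>. z \<eta> k \<alpha> \<noteq> 0} \<subseteq> S \<xi>)"
proof -
  define CH where "CH = (\<lambda>S k. SOME p. fst p \<in> Z \<and> (countable S \<longrightarrow> PB c Z S (dlt k) (fst p) (snd p)))"
  have CH: "fst (CH S k) \<in> Z \<and> (countable S \<longrightarrow> PB c Z S (dlt k) (fst (CH S k)) (snd (CH S k)))" for S k
  proof -
    have "\<exists>p. fst p \<in> Z \<and> (countable S \<longrightarrow> PB c Z S (dlt k) (fst p) (snd p))"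
    proof (cases "countable S")
      case True
      have "dlt k > 0" "dlt k \<le> 1/8" unfolding dlt_def by (auto simp: field_simps)
      then obtain z a where "PB c Z S (dlt k) z a" using exists_block[OF cs ns True] by blast
      then show ?thesis unfolding PB_def by (intro exI[of _ "(z, a)"]) auto
    next
      case False
      then show ?thesis using cs_zero[OF cs] by (intro exI[of _ "(\<lambda>_. 0, {})"]) auto
    qed
    then show ?thesis unfolding CH_def by (rule someI_ex)
  qed
  define R :: "('a \<times> 'a) set" where "R = {(x, y). x < y}"
  have wfR: "wf R" unfolding R_def by (rule wf)
  define H where "H = (\<lambda>(g :: 'a \<Rightarrow> nat \<Rightarrow> ('a \<Rightarrow> real) \<times> 'a set) \<xi>. (\<lambda>k. CH (\<Union>\<eta>\<in>{..<\<xi>}. \<Union>k'. {\<alpha>. fst (g \<eta> k') \<alpha> \<noteq> 0}) k))"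
  define G where "G = wfrec R H"
  have Geq: "G \<xi> = H G \<xi>" for \<xi>
  proof -
    have "G \<xi> = H (cut G R \<xi>) \<xi>" unfolding G_def by (rule wfrec[OF wfR])
    also have "\<dots> = H G \<xi>"
    proof -
      have "(\<Union>\<eta>\<in>{..<\<xi>}. \<Union>k'. {\<alpha>. fst (cut G R \<xi> \<eta> k') \<alpha> \<noteq> 0}) = (\<Union>\<eta>\<in>{..<\<xi>}. \<Union>k'. {\<alpha>. fst (G \<eta> k') \<alpha> \<noteq> 0})"
        by (intro SUP_cong refl) (simp add: cut_apply R_def)
      then show ?thesis unfolding H_def by simp
    qed
    finally show ?thesis .
  qed
  define z where "z = (\<lambda>\<xi> k. fst (G \<xi> k))"
  define a where "a = (\<lambda>\<xi> k. snd (G \<xi> k))"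
  define S where "S = (\<lambda>\<xi>. \<Union>\<eta>\<in>{..<\<xi>}. \<Union>k'. {\<alpha>. z \<eta> k' \<alpha> \<noteq> 0})"
  have Gxi: "G \<xi> k = CH (S \<xi>) k" for \<xi> k
    using Geq[of \<xi>] unfolding H_def S_def z_def by simp
  have zZ: "z \<xi> k \<in> Z" for \<xi> k unfolding z_def Gxi using CH by blast
  have cSx: "countable (S \<xi>)" for \<xi>
    unfolding S_def using omega1_countable[OF om, of \<xi>] XA_countable_support[OF cs_XA[OF cs zZ]]
    by (intro countable_UN) auto
  have "PB c Z (S \<xi>) (dlt k) (z \<xi> k) (a \<xi> k)" for \<xi> k
    unfolding z_def a_def Gxi using CH cSx by blast
  moreover have "\<eta> < \<xi> \<Longrightarrow> {\<alpha>. z \<eta> k \<alpha> \<noteq> 0} \<subseteq> S \<xi>" for \<eta> \<xi> k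
    unfolding S_def by auto
  ultimately show ?thesis by blast
qed

lemma omega1_unc: "is_omega1 TYPE('a::wellorder) \<Longrightarrow> \<not> countable (UNIV :: 'a set)"
  unfolding is_omega1_def by auto

lemma omega1_cnt: "is_omega1 TYPE('a::wellorder) \<Longrightarrow> countable {..<(\<xi>::'a)}"
  unfolding is_omega1_def by auto

lemma omega1_cnt_le: "is_omega1 TYPE('a::wellorder) \<Longrightarrow> countable {..(\<xi>::'a)}"
proof -
  assume om: "is_omega1 TYPE('a::wellorder)"
  have "{..\<xi>} = insert \<xi> {..<\<xi>}" by auto
  then show ?thesis using omega1_cnt[OF om, of \<xi>] by simp
qed

lemma unc_diff: "\<not> countable U \<Longrightarrow> countable P \<Longrightarrow> \<not> countable (U - P)"
  by (metis countable_Un Un_Diff_cancel2 countable_subset sup_ge1 sup_commute)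

lemma unc_above:
  assumes om: "is_omega1 TYPE('a::wellorder)" and U: "\<not> countable (U :: 'a set)"
  shows "\<not> countable {\<xi>\<in>U. \<beta> < \<xi>}"
proof -
  have "{\<xi>\<in>U. \<beta> < \<xi>} = U - {..\<beta>}" by auto
  then show ?thesis using unc_diff[OF U omega1_cnt_le[OF om]] by simp
qed

lemma strong_T0:
  fixes c :: "'a::wellorder set \<Rightarrow> 'i::zero_neq_one \<times> 'j" and Af :: "'a \<Rightarrow> 'a set"
  assumes "strong_T_coloring c I J"
    "\<And>\<xi>. finite (Af \<xi>) \<and> Af \<xi> \<noteq> {}" "\<And>\<xi> \<eta>. \<xi> \<noteq> \<eta> \<Longrightarrow> Af \<xi> \<inter> Af \<eta> = {}"
  shows "\<exists>\<xi> \<eta>. \<xi> < \<eta> \<and> (fst \<circ> c) ` otimes (Af \<xi>) (Af \<eta>) = {0}"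
proof -
  note H = conjunct2[OF assms(1)[unfolded strong_T_coloring_def]]
  have "(\<forall>\<xi>. finite (Af \<xi>) \<and> Af \<xi> \<noteq> {}) \<and> (\<forall>\<xi> \<eta>. \<xi> \<noteq> \<eta> \<longrightarrow> Af \<xi> \<inter> Af \<eta> = {})"
    using assms(2,3) by blast
  from mp[OF spec[OF H, of Af] this] show ?thesis by (rule conjunct1)
qed

lemma comb_step:
  fixes c :: "'a::wellorder set \<Rightarrow> 'i::zero_neq_one \<times> 'j" and a :: "'a \<Rightarrow> nat \<Rightarrow> 'a set"
  assumes om: "is_omega1 TYPE('a)"
    and st: "strong_T_coloring c I J"
    and aA: "\<And>\<xi> k. a \<xi> k \<in> T0_family c \<and> a \<xi> k \<noteq> {}"
    and disj: "\<And>\<xi> \<eta> k l. \<xi> \<noteq> \<eta> \<Longrightarrow> a \<xi> k \<inter> a \<eta> l = {}"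
    and gb: "b \<in> T0_family c" "\<And>k. k \<ge> n \<Longrightarrow> \<not> countable {\<xi>. b \<union> a \<xi> k \<in> T0_family c}"
  shows "\<exists>\<xi>. \<beta> < \<xi> \<and> b \<union> a \<xi> n \<in> T0_family c \<and>
     (\<forall>k\<ge>Suc n. \<not> countable {\<eta>. b \<union> a \<xi> n \<union> a \<eta> k \<in> T0_family c})"
proof (rule ccontr)
  let ?A = "T0_family c"
  assume "\<not> ?thesis"
  then have bad: "\<And>\<xi>. \<beta> < \<xi> \<Longrightarrow> b \<union> a \<xi> n \<in> ?A \<Longrightarrow> \<exists>k\<ge>Suc n. countable {\<eta>. b \<union> a \<xi> n \<union> a \<eta> k \<in> ?A}"
    by blast
  define C where "C = (\<lambda>\<xi> k. {\<eta>. b \<union> a \<xi> n \<union> a \<eta> k \<in> ?A})"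
  define U where "U = {\<xi>. \<beta> < \<xi> \<and> b \<union> a \<xi> n \<in> ?A}"
  have Uunc: "\<not> countable U"
    using unc_above[OF om gb(2)[of n], of \<beta>] unfolding U_def by (simp add: conj_commute)
  define Uk where "Uk = (\<lambda>k. {\<xi>\<in>U. Suc n \<le> k \<and> countable (C \<xi> k)})"
  have "U \<subseteq> (\<Union>k. Uk k)" using bad unfolding U_def Uk_def C_def by blast
  then have "\<exists>k. \<not> countable (Uk k)"
  proof (rule contrapos_pp)
    assume "\<not> (\<exists>k. \<not> countable (Uk k))"
    then have "countable (\<Union>k. Uk k)" by (intro countable_UN) auto
    then show "\<not> U \<subseteq> (\<Union>k. Uk k)" using Uunc countable_subset by blast
  qed
  then obtain k where Uk: "\<not> countable (Uk k)" by blast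
  then obtain \<xi>0 where "\<xi>0 \<in> Uk k" by (metis countable_empty equals0I)
  then have kn: "Suc n \<le> k" unfolding Uk_def by auto
  define V where "V = {\<eta>. b \<union> a \<eta> k \<in> ?A}"
  have Vunc: "\<not> countable V" unfolding V_def using gb(2)[of k] kn by auto
  define C' where "C' = (\<lambda>x. if countable (C x k) then C x k else {})"
  have cC': "countable (C' x)" for x unfolding C'_def by auto
  define ok where "ok = (\<lambda>P (p :: 'a \<times> 'a). fst p \<in> Uk k \<and> snd p \<in> V \<and> fst p \<notin> P \<and> snd p \<notin> P \<and> fst p \<noteq> snd p)"
  have okex: "ok P (SOME p. ok P p)" if cP: "countable P" for P
  proof -
    obtain x where x: "x \<in> Uk k - P" using unc_diff[OF Uk cP] by (metis countable_empty equals0I)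
    obtain y where y: "y \<in> V - (insert x P)" using unc_diff[OF Vunc, of "insert x P"] cP
      by (metis countable_empty countable_insert equals0I)
    have "ok P (x, y)" unfolding ok_def using x y by auto
    then show ?thesis by (rule someI[of "ok P"])
  qed
  define R :: "('a \<times> 'a) set" where "R = {(x, y). x < y}"
  have wfR: "wf R" unfolding R_def by (rule wf)
  define PP where "PP = (\<lambda>(g :: 'a \<Rightarrow> 'a \<times> 'a) \<alpha>. \<Union>\<gamma>\<in>{..<\<alpha>}. {fst (g \<gamma>), snd (g \<gamma>)} \<union> C' (fst (g \<gamma>)))"
  define H where "H = (\<lambda>(g :: 'a \<Rightarrow> 'a \<times> 'a) \<alpha>. SOME p. ok (PP g \<alpha>) p)"
  define F where "F = wfrec R H"
  have Feq: "F \<alpha> = H F \<alpha>" for \<alpha>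
  proof -
    have "F \<alpha> = H (cut F R \<alpha>) \<alpha>" unfolding F_def by (rule wfrec[OF wfR])
    also have "PP (cut F R \<alpha>) \<alpha> = PP F \<alpha>"
      unfolding PP_def by (intro SUP_cong refl) (simp add: cut_apply R_def)
    then have "H (cut F R \<alpha>) \<alpha> = H F \<alpha>" unfolding H_def by simp
    finally show ?thesis .
  qed
  have cPP: "countable (PP F \<alpha>)" for \<alpha>
    unfolding PP_def using omega1_cnt[OF om, of \<alpha>] cC' by (intro countable_UN) auto
  have okF: "ok (PP F \<alpha>) (F \<alpha>)" for \<alpha>
    using okex[OF cPP[of \<alpha>]] Feq[of \<alpha>] unfolding H_def by simp
  define x where "x = (\<lambda>\<alpha>. fst (F \<alpha>))"
  define y where "y = (\<lambda>\<alpha>. snd (F \<alpha>))"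
  have xU: "x \<alpha> \<in> Uk k" and yV: "y \<alpha> \<in> V" and xy: "x \<alpha> \<noteq> y \<alpha>" for \<alpha>
    using okF[of \<alpha>] unfolding ok_def x_def y_def by auto
  have fresh: "x \<gamma> \<noteq> x \<alpha> \<and> x \<gamma> \<noteq> y \<alpha> \<and> y \<gamma> \<noteq> x \<alpha> \<and> y \<gamma> \<noteq> y \<alpha> \<and> y \<gamma> \<notin> C' (x \<alpha>)" if "\<alpha> < \<gamma>" for \<alpha> \<gamma>
  proof -
    have "{x \<alpha>, y \<alpha>} \<union> C' (x \<alpha>) \<subseteq> PP F \<gamma>" unfolding PP_def x_def y_def using that by auto
    moreover have "x \<gamma> \<notin> PP F \<gamma>" "y \<gamma> \<notin> PP F \<gamma>" using okF[of \<gamma>] unfolding ok_def x_def y_def by auto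
    ultimately show ?thesis by auto
  qed
  define Af where "Af = (\<lambda>\<alpha>. a (x \<alpha>) n \<union> a (y \<alpha>) k)"
  have Af1: "finite (Af \<alpha>) \<and> Af \<alpha> \<noteq> {}" for \<alpha>
    unfolding Af_def using aA T0_finite by auto
  have Af2: "Af \<alpha> \<inter> Af \<gamma> = {}" if "\<alpha> \<noteq> \<gamma>" for \<alpha> \<gamma>
  proof -
    have "x \<gamma> \<noteq> x \<alpha> \<and> x \<gamma> \<noteq> y \<alpha> \<and> y \<gamma> \<noteq> x \<alpha> \<and> y \<gamma> \<noteq> y \<alpha>"
      using fresh[of \<alpha> \<gamma>] fresh[of \<gamma> \<alpha>] that by (metis neqE)
    then show ?thesis unfolding Af_def using disj by blast
  qed
  obtain \<alpha> \<gamma> where ag: "\<alpha> < \<gamma>" "(fst \<circ> c) ` otimes (Af \<alpha>) (Af \<gamma>) = {0}"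
    using strong_T0[where Af=Af, OF st Af1 Af2] by blast
  have xa: "b \<union> a (x \<alpha>) n \<in> ?A" "countable (C (x \<alpha>) k)" using xU[of \<alpha>] unfolding Uk_def U_def by auto
  have "b \<union> a (x \<alpha>) n \<union> a (y \<gamma>) k \<in> ?A"
  proof (rule T0_union[OF xa(1) conjunct1[OF aA]])
    fix u v assume u: "u \<in> b \<union> a (x \<alpha>) n" and v: "v \<in> a (y \<gamma>) k" and uv: "u \<noteq> v"
    show "fst (c {u, v}) = 0"
    proof (cases "u \<in> b")
      case True
      have "b \<union> a (y \<gamma>) k \<in> ?A" using yV[of \<gamma>] unfolding V_def by auto
      then show ?thesis using True v uv unfolding T0_iff by blast
    next
      case False
      then have "u \<in> Af \<alpha>" "v \<in> Af \<gamma>" using u v unfolding Af_def by auto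
      then have "{u, v} \<in> otimes (Af \<alpha>) (Af \<gamma>)" unfolding otimes_def by auto
      then show ?thesis using ag(2) by (metis comp_apply image_eqI singletonD)
    qed
  qed
  then have "y \<gamma> \<in> C' (x \<alpha>)" unfolding C'_def C_def using xa(2) unfolding C_def by auto
  then show False using fresh[OF ag(1)] by auto
qed

lemma comb:
  fixes c :: "'a::wellorder set \<Rightarrow> 'i::zero_neq_one \<times> 'j" and a :: "'a \<Rightarrow> nat \<Rightarrow> 'a set"
  assumes om: "is_omega1 TYPE('a)"
    and st: "strong_T_coloring c I J"
    and aA: "\<And>\<xi> k. a \<xi> k \<in> T0_family c \<and> a \<xi> k \<noteq> {}"
    and disj: "\<And>\<xi> \<eta> k l. \<xi> \<noteq> \<eta> \<Longrightarrow> a \<xi> k \<inter> a \<eta> l = {}"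
  shows "\<exists>s. strict_mono s \<and> (\<forall>N. (\<Union>n<N. a (s n) n) \<in> T0_family c)"
proof -
  let ?A = "T0_family c"
  define good where "good = (\<lambda>n b. b \<in> ?A \<and> (\<forall>k\<ge>n. \<not> countable {\<xi>. b \<union> a \<xi> k \<in> ?A}))"
  have step: "\<exists>\<xi>. \<beta> < \<xi> \<and> good (Suc n) (b \<union> a \<xi> n)" if "good n b" for n b \<beta>
  proof -
    have "b \<in> ?A" "\<And>k. k \<ge> n \<Longrightarrow> \<not> countable {\<xi>. b \<union> a \<xi> k \<in> ?A}"
      using that unfolding good_def by auto
    from comb_step[where c=c and a=a and b=b and n=n and \<beta>=\<beta>, OF om st aA disj this] obtain \<xi> where "\<beta> < \<xi>" "b \<union> a \<xi> n \<in> ?A"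
      "\<forall>k\<ge>Suc n. \<not> countable {\<eta>. b \<union> a \<xi> n \<union> a \<eta> k \<in> ?A}" by blast
    then show ?thesis unfolding good_def by blast
  qed
  define nx where "nx = (\<lambda>n b \<beta>. SOME \<xi>. \<beta> < \<xi> \<and> good (Suc n) (b \<union> a \<xi> n))"
  have nx: "\<beta> < nx n b \<beta> \<and> good (Suc n) (b \<union> a (nx n b \<beta>) n)" if "good n b" for n b \<beta>
    unfolding nx_def using someI_ex[OF step[OF that]] .
  define st where "st = rec_nat ({}, undefined) (\<lambda>n p. (fst p \<union> a (nx n (fst p) (snd p)) n, nx n (fst p) (snd p)))"
  have st0: "st 0 = ({}, undefined)" unfolding st_def by simp
  have stS: "st (Suc n) = (fst (st n) \<union> a (nx n (fst (st n)) (snd (st n))) n, nx n (fst (st n)) (snd (st n)))" for n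
    unfolding st_def by simp
  have g: "good n (fst (st n))" for n
  proof (induction n)
    case 0
    have "\<not> countable {\<xi>. {} \<union> a \<xi> k \<in> ?A}" for k using aA omega1_unc[OF om] by simp
    then show ?case unfolding good_def st0 using T0_empty by auto
  next
    case (Suc n)
    then show ?case using nx[OF Suc] unfolding stS by simp
  qed
  define s where "s = (\<lambda>n. snd (st (Suc n)))"
  have inc: "snd (st n) < snd (st (Suc n))" for n
    using nx[OF g[of n]] unfolding stS by simp
  have sm: "strict_mono s" unfolding strict_mono_Suc_iff s_def using inc by blast
  have un: "fst (st N) = (\<Union>n<N. a (s n) n)" for N
  proof (induction N)
    case 0
    then show ?case using st0 by simp
  next
    case (Suc N)
    have "fst (st (Suc N)) = fst (st N) \<union> a (s N) N" unfolding s_def stS by simp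
    then show ?case using Suc by (simp add: lessThan_Suc Un_commute)
  qed
  have "(\<Union>n<N. a (s n) n) \<in> ?A" for N using g[of N] unfolding un good_def by simp
  then show ?thesis using sm by blast
qed

lemma summable_prod_sq:
  fixes u v :: "nat \<Rightarrow> real"
  assumes "summable (\<lambda>n. (u n)^2)" "summable (\<lambda>n. (v n)^2)"
  shows "summable (\<lambda>n. u n * v n)"
proof (rule summable_comparison_test)
  show "\<exists>N. \<forall>n\<ge>N. norm (u n * v n) \<le> ((u n)^2 + (v n)^2) / 2"
  proof (intro exI allI impI)
    fix n
    have "0 \<le> (\<bar>u n\<bar> - \<bar>v n\<bar>)^2" by simp
    then show "norm (u n * v n) \<le> ((u n)^2 + (v n)^2) / 2"
      by (simp add: power2_eq_square abs_mult algebra_simps)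
  qed
  show "summable (\<lambda>n. ((u n)^2 + (v n)^2) / 2)"
    using summable_add[OF assms] by (intro summable_divide)
qed

lemma CS_finite:
  fixes u v :: "nat \<Rightarrow> real"
  shows "(\<Sum>n\<in>A. u n * v n)^2 \<le> (\<Sum>n\<in>A. (u n)^2) * (\<Sum>n\<in>A. (v n)^2)"
proof -
  have "\<bar>\<Sum>n\<in>A. u n * v n\<bar> \<le> (\<Sum>n\<in>A. \<bar>u n\<bar> * \<bar>v n\<bar>)"
    by (metis (no_types, lifting) abs_mult sum.cong sum_abs)
  also have "\<dots> \<le> L2_set u A * L2_set v A" by (rule L2_set_mult_ineq)
  finally have "\<bar>\<Sum>n\<in>A. u n * v n\<bar>^2 \<le> (L2_set u A * L2_set v A)^2"
    by (intro power_mono) auto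
  then show ?thesis unfolding L2_set_def
    by (simp add: power_mult_distrib sum_nonneg)
qed

lemma CS_infinite:
  fixes u v :: "nat \<Rightarrow> real"
  assumes su: "summable (\<lambda>n. (u n)^2)" and sv: "summable (\<lambda>n. (v n)^2)"
  shows "(\<Sum>n. u n * v n)^2 \<le> (\<Sum>n. (u n)^2) * (\<Sum>n. (v n)^2)"
proof -
  have s: "summable (\<lambda>n. u n * v n)" by (rule summable_prod_sq[OF su sv])
  have lim: "(\<lambda>N. (\<Sum>n<N. u n * v n)^2) \<longlonglongrightarrow> (\<Sum>n. u n * v n)^2"
    by (intro tendsto_power summable_LIMSEQ[OF s])
  have "(\<Sum>n<N. u n * v n)^2 \<le> (\<Sum>n. (u n)^2) * (\<Sum>n. (v n)^2)" for N
  proof -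
    have "(\<Sum>n<N. u n * v n)^2 \<le> (\<Sum>n<N. (u n)^2) * (\<Sum>n<N. (v n)^2)" by (rule CS_finite)
    also have "\<dots> \<le> (\<Sum>n. (u n)^2) * (\<Sum>n. (v n)^2)"
      by (intro mult_mono sum_le_suminf su sv) (auto intro: sum_nonneg suminf_nonneg su sv)
    finally show ?thesis .
  qed
  then show ?thesis using lim by (intro LIMSEQ_le_const2) auto
qed

lemma subsingleton_finite:
  assumes "\<And>n m. P n \<Longrightarrow> P m \<Longrightarrow> n = m"
  shows "finite {n. P n}"
proof (cases "\<exists>n. P n")
  case True
  then obtain n0 where "P n0" by auto
  then have "{n. P n} \<subseteq> {n0}" using assms by auto
  then show ?thesis by (rule finite_subset) auto
next
  case False
  then show ?thesis by auto
qed

lemma dlt_sum: "summable (\<lambda>n. (1 / (8 * 2^n :: real))^2)" "(\<Sum>n. (1 / (8 * 2^n :: real))^2) = 1/48"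
proof -
  have eq: "(\<lambda>n. (1 / (8 * 2^n :: real))^2) = (\<lambda>n. (1/64) * (1/4)^n)"
  proof
    fix n :: nat
    have "(2::real)^n * 2^n = 4^n" by (metis power_mult_distrib num_double numeral_times_numeral)
    then show "(1 / (8 * 2^n :: real))^2 = (1/64) * (1/4)^n"
      by (simp add: power2_eq_square power_divide field_simps)
  qed
  have g: "(\<lambda>n. (1/4::real)^n) sums (1 / (1 - 1/4))" by (rule geometric_sums) auto
  have "(\<lambda>n. (1/64) * (1/4::real)^n) sums ((1/64) * (1 / (1 - 1/4)))" by (rule sums_mult[OF g])
  then have "(\<lambda>n. (1 / (8 * 2^n :: real))^2) sums (1/48)" unfolding eq by simp
  then show "summable (\<lambda>n. (1 / (8 * 2^n :: real))^2)" "(\<Sum>n. (1 / (8 * 2^n :: real))^2) = 1/48"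
    by (auto simp: sums_iff)
qed

locale seqL =
  fixes c :: "'a set \<Rightarrow> 'i::zero_neq_one \<times> 'j" and Z :: "('a \<Rightarrow> real) set"
    and zz :: "nat \<Rightarrow> 'a \<Rightarrow> real" and aa :: "nat \<Rightarrow> 'a set" and SS :: "nat \<Rightarrow> 'a set"
  assumes cs: "closed_subspace_XA (T0_family c) Z"
    and zZ: "\<And>n. zz n \<in> Z"
    and zn: "\<And>n. normA (T0_family c) (zz n) = 1"
    and small: "\<And>n b. b \<in> T0_family c \<Longrightarrow> L2_set (zz n) (b \<inter> SS n) \<le> dlt n"
    and aS: "\<And>n. aa n \<inter> SS n = {}"
    and asupp: "\<And>n. aa n \<subseteq> {\<alpha>. zz n \<alpha> \<noteq> 0}"
    and asq: "\<And>n. sqs (aa n) (zz n) \<ge> 1/4"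
    and supp: "\<And>m n. m < n \<Longrightarrow> {\<alpha>. zz m \<alpha> \<noteq> 0} \<subseteq> SS n"
    and un: "\<And>N. (\<Union>n<N. aa n) \<in> T0_family c"
begin

definition w where "w n \<alpha> = (if \<alpha> \<in> SS n then 0 else zz n \<alpha>)"
definition r where "r n \<alpha> = (if \<alpha> \<in> SS n then zz n \<alpha> else 0)"
definition T where "T f = (\<lambda>\<alpha>. \<Sum>n. f n * zz n \<alpha>)"
definition W where "W f = (\<lambda>\<alpha>. \<Sum>n. f n * w n \<alpha>)"
definition R where "R f = (\<lambda>\<alpha>. \<Sum>n. f n * r n \<alpha>)"

lemma zwr: "zz n \<alpha> = w n \<alpha> + r n \<alpha>"
  unfolding w_def r_def by auto

lemma zbd: "normA_finite (T0_family c) (zz n)"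
  using XA_bounded[OF cs_XA[OF cs zZ]] .

lemma wdisj: "w n \<alpha> \<noteq> 0 \<Longrightarrow> w m \<alpha> \<noteq> 0 \<Longrightarrow> n = m"
proof (rule ccontr)
  assume a: "w n \<alpha> \<noteq> 0" "w m \<alpha> \<noteq> 0" "n \<noteq> m"
  show False
  proof (cases "n < m")
    case True
    then have "\<alpha> \<in> SS m" using supp[OF True] a(1) unfolding w_def by (auto split: if_splits)
    then show False using a(2) unfolding w_def by auto
  next
    case False
    then have "m < n" using a(3) by auto
    then have "\<alpha> \<in> SS n" using supp[of m n] a(2) unfolding w_def by (auto split: if_splits)
    then show False using a(1) unfolding w_def by auto
  qed
qed

lemma dlt_pos: "dlt n > 0" unfolding dlt_def by auto

lemma dlt_sq: "summable (\<lambda>n. (dlt n)^2)" "(\<Sum>n. (dlt n)^2) = 1/48"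
  unfolding dlt_def using dlt_sum by auto

lemma rbound: "\<bar>r n \<alpha>\<bar> \<le> dlt n"
proof (cases "\<alpha> \<in> SS n")
  case True
  have "L2_set (zz n) ({\<alpha>} \<inter> SS n) \<le> dlt n" using small[OF T0_single] .
  then show ?thesis using True unfolding r_def by (simp add: L2_set_single)
next
  case False
  then show ?thesis unfolding r_def using dlt_pos[of n] by simp
qed

lemma r_sq_summable: "summable (\<lambda>n. (r n \<alpha>)^2)"
proof (rule summable_comparison_test[OF _ dlt_sq(1)])
  show "\<exists>N. \<forall>n\<ge>N. norm ((r n \<alpha>)\<^sup>2) \<le> (dlt n)\<^sup>2"
    using rbound dlt_pos by (auto intro!: exI[of _ 0] simp: abs_le_square_iff[symmetric] less_imp_le)
qed

lemma w_fin: "finite {n. w n \<alpha> \<noteq> 0}"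
  using wdisj by (intro subsingleton_finite) auto

lemma sum_r: "f \<in> l2 \<Longrightarrow> summable (\<lambda>n. f n * r n \<alpha>)"
  unfolding l2_def by (intro summable_prod_sq r_sq_summable) simp

lemma sum_w: "summable (\<lambda>n. f n * w n \<alpha>)"
  by (rule summable_finite[OF w_fin[of \<alpha>]]) auto

lemma sum_z: "f \<in> l2 \<Longrightarrow> summable (\<lambda>n. f n * zz n \<alpha>)"
  using summable_add[OF sum_w sum_r] by (simp add: zwr algebra_simps)

lemma T_split: "f \<in> l2 \<Longrightarrow> T f \<alpha> = W f \<alpha> + R f \<alpha>"
  unfolding T_def W_def R_def using suminf_add[OF sum_w sum_r] by (simp add: zwr algebra_simps)

lemma W_sq: "summable (\<lambda>n. (f n * w n \<alpha>)^2)" "(W f \<alpha>)^2 = (\<Sum>n. (f n * w n \<alpha>)^2)"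
proof -
  show "summable (\<lambda>n. (f n * w n \<alpha>)^2)"
    by (rule summable_finite[OF w_fin[of \<alpha>]]) auto
  show "(W f \<alpha>)^2 = (\<Sum>n. (f n * w n \<alpha>)^2)"
  proof (cases "\<exists>n0. w n0 \<alpha> \<noteq> 0")
    case True
    then obtain n0 where n0: "w n0 \<alpha> \<noteq> 0" by auto
    have z: "w n \<alpha> = 0" if "n \<notin> {n0}" for n using wdisj[OF n0, of n] that by auto
    have "W f \<alpha> = (\<Sum>n\<in>{n0}. f n * w n \<alpha>)" unfolding W_def by (rule suminf_finite) (use z in auto)
    moreover have "(\<Sum>n. (f n * w n \<alpha>)^2) = (\<Sum>n\<in>{n0}. (f n * w n \<alpha>)^2)"
      by (rule suminf_finite) (use z in auto)
    ultimately show ?thesis by simp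
  next
    case False
    then show ?thesis unfolding W_def by simp
  qed
qed

lemma W_on: "\<alpha> \<in> aa n \<Longrightarrow> W f \<alpha> = f n * zz n \<alpha>"
proof -
  assume a: "\<alpha> \<in> aa n"
  have wn: "w n \<alpha> = zz n \<alpha>" "w n \<alpha> \<noteq> 0" using a aS[of n] asupp[of n] unfolding w_def by auto
  have z: "w m \<alpha> = 0" if "m \<notin> {n}" for m using wdisj[OF wn(2), of m] that by auto
  have "W f \<alpha> = (\<Sum>m\<in>{n}. f m * w m \<alpha>)" unfolding W_def by (rule suminf_finite) (use z in auto)
  then show ?thesis using wn by simp
qed

lemma R_sq: "f \<in> l2 \<Longrightarrow> (R f \<alpha>)^2 \<le> (\<Sum>n. (f n)^2) * (\<Sum>n. (r n \<alpha>)^2)"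
  unfolding R_def l2_def by (intro CS_infinite r_sq_summable) simp

lemma B1:
  assumes a: "a \<in> T0_family c" and f: "f \<in> l2"
  shows "(\<Sum>\<alpha>\<in>a. (W f \<alpha>)^2) \<le> (\<Sum>n. (f n)^2)"
proof -
  have fa: "finite a" using T0_finite[OF a] .
  have fs: "summable (\<lambda>n. (f n)^2)" using f unfolding l2_def by simp
  define q where "q = (\<lambda>n. \<Sum>\<alpha>\<in>a. (w n \<alpha>)^2)"
  have q1: "q n \<le> 1" for n
  proof -
    have "q n = sqs (a - SS n) (zz n)"
      unfolding q_def sqs_def w_def using fa
      by (simp add: if_distrib[of "\<lambda>t. t^2"] sum.If_cases Diff_eq)
    also have "\<dots> \<le> (normA (T0_family c) (zz n))^2"
      by (rule normA_sqs[OF zbd]) (rule T0_sub[OF a], auto)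
    finally show ?thesis using zn by simp
  qed
  have q0: "q n \<ge> 0" for n unfolding q_def by (simp add: sum_nonneg)
  have "(\<Sum>\<alpha>\<in>a. (W f \<alpha>)^2) = (\<Sum>\<alpha>\<in>a. \<Sum>n. (f n * w n \<alpha>)^2)"
    using W_sq(2) by simp
  also have "\<dots> = (\<Sum>n. \<Sum>\<alpha>\<in>a. (f n * w n \<alpha>)^2)"
    by (rule suminf_sum[symmetric]) (rule W_sq(1))
  also have "\<dots> = (\<Sum>n. (f n)^2 * q n)"
    unfolding q_def by (simp add: power_mult_distrib sum_distrib_left)
  also have "\<dots> \<le> (\<Sum>n. (f n)^2)"
  proof (rule suminf_le)
    show "(f n)^2 * q n \<le> (f n)^2" for n using q1[of n] by (simp add: mult_left_le)
    show "summable (\<lambda>n. (f n)^2 * q n)"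
      by (rule summable_comparison_test[OF _ fs]) (use q0 q1 in \<open>auto intro!: exI[of _ 0] simp: abs_mult mult_left_le\<close>)
    show "summable (\<lambda>n. (f n)^2)" by (rule fs)
  qed
  finally show ?thesis .
qed

lemma B2:
  assumes a: "a \<in> T0_family c" and f: "f \<in> l2"
  shows "(\<Sum>\<alpha>\<in>a. (R f \<alpha>)^2) \<le> (\<Sum>n. (f n)^2) * (1/48)"
proof -
  have fa: "finite a" using T0_finite[OF a] .
  define F where "F = (\<Sum>n. (f n)^2)"
  have F0: "F \<ge> 0" unfolding F_def using f unfolding l2_def by (simp add: suminf_nonneg)
  have "(\<Sum>\<alpha>\<in>a. (R f \<alpha>)^2) \<le> (\<Sum>\<alpha>\<in>a. F * (\<Sum>n. (r n \<alpha>)^2))"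
    unfolding F_def by (intro sum_mono R_sq f)
  also have "\<dots> = F * (\<Sum>n. \<Sum>\<alpha>\<in>a. (r n \<alpha>)^2)"
    by (simp add: sum_distrib_left[symmetric] suminf_sum r_sq_summable)
  also have "\<dots> \<le> F * (\<Sum>n. (dlt n)^2)"
  proof (intro mult_left_mono F0 suminf_le)
    have le: "(\<Sum>\<alpha>\<in>a. (r n \<alpha>)^2) \<le> (dlt n)^2" for n
    proof -
      have "(\<Sum>\<alpha>\<in>a. (r n \<alpha>)^2) = (L2_set (zz n) (a \<inter> SS n))^2"
        unfolding L2_set_def r_def using fa
        by (simp add: sum_nonneg if_distrib[of "\<lambda>t. t^2"] sum.inter_restrict cong: if_cong)
      also have "\<dots> \<le> (dlt n)^2" using small[OF a, of n] by (intro power_mono) auto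
      finally show ?thesis .
    qed
    then show "(\<Sum>\<alpha>\<in>a. (r n \<alpha>)^2) \<le> (dlt n)^2" for n .
    show "summable (\<lambda>n. \<Sum>\<alpha>\<in>a. (r n \<alpha>)^2)" by (intro summable_sum r_sq_summable)
    show "summable (\<lambda>n. (dlt n)^2)" by (rule dlt_sq(1))
  qed
  finally show ?thesis unfolding F_def dlt_sq(2) .
qed

lemma sqT_le:
  assumes a: "a \<in> T0_family c" and f: "f \<in> l2"
  shows "(\<Sum>\<alpha>\<in>a. (T f \<alpha>)^2) \<le> 4 * (\<Sum>n. (f n)^2)"
proof -
  have F0: "(\<Sum>n. (f n)^2) \<ge> 0" using f unfolding l2_def by (simp add: suminf_nonneg)
  have "(\<Sum>\<alpha>\<in>a. (T f \<alpha>)^2) \<le> (\<Sum>\<alpha>\<in>a. 2 * (W f \<alpha>)^2 + 2 * (R f \<alpha>)^2)"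
  proof (intro sum_mono)
    fix \<alpha>
    have "0 \<le> (W f \<alpha> - R f \<alpha>)^2" by simp
    then show "(T f \<alpha>)^2 \<le> 2 * (W f \<alpha>)^2 + 2 * (R f \<alpha>)^2"
      using T_split[OF f] by (simp add: power2_eq_square algebra_simps)
  qed
  also have "\<dots> = 2 * (\<Sum>\<alpha>\<in>a. (W f \<alpha>)^2) + 2 * (\<Sum>\<alpha>\<in>a. (R f \<alpha>)^2)"
    by (simp add: sum.distrib sum_distrib_left)
  also have "\<dots> \<le> 4 * (\<Sum>n. (f n)^2)" using B1[OF a f] B2[OF a f] F0 by linarith
  finally show ?thesis .
qed

lemma UB:
  assumes f: "f \<in> l2"
  shows "normA_finite (T0_family c) (T f)" "normA (T0_family c) (T f) \<le> 2 * l2_norm f"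
proof -
  have le: "L2_set (T f) a \<le> 2 * l2_norm f" if a: "a \<in> T0_family c" for a
  proof -
    have "L2_set (T f) a = sqrt (\<Sum>\<alpha>\<in>a. (T f \<alpha>)^2)" unfolding L2_set_def ..
    also have "\<dots> \<le> sqrt (4 * (\<Sum>n. (f n)^2))" using sqT_le[OF a f] by (rule real_sqrt_le_mono)
    also have "\<dots> = 2 * l2_norm f" unfolding l2_norm_def by (simp add: real_sqrt_mult)
    finally show ?thesis .
  qed
  show "normA_finite (T0_family c) (T f)" by (rule normA_finiteI) (rule le)
  show "normA (T0_family c) (T f) \<le> 2 * l2_norm f" by (rule normA_leI(1)[OF T0_ne]) (rule le)
qed

lemma aa_disj: "m \<noteq> n \<Longrightarrow> aa m \<inter> aa n = {}"
proof -
  assume mn: "m \<noteq> n"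
  have *: "aa i \<inter> aa j = {}" if "i < j" for i j
    using asupp[of i] supp[OF that] aS[of j] by blast
  show ?thesis using mn *[of m n] *[of n m] by (metis Int_commute linorder_neqE_nat)
qed

lemma aa_fin: "finite (aa n)"
proof -
  have "aa n \<subseteq> (\<Union>i<Suc n. aa i)" by auto
  then show ?thesis using T0_finite[OF un[of "Suc n"]] by (rule finite_subset)
qed

lemma LB:
  assumes f: "f \<in> l2"
  shows "(1/4) * l2_norm f \<le> normA (T0_family c) (T f)"
proof -
  define F where "F = (\<Sum>n. (f n)^2)"
  define NT where "NT = normA (T0_family c) (T f)"
  have fs: "summable (\<lambda>n. (f n)^2)" using f unfolding l2_def by simp
  have F0: "F \<ge> 0" unfolding F_def using fs by (simp add: suminf_nonneg)
  have NT0: "NT \<ge> 0" unfolding NT_def using normA_nonneg[OF UB(1)[OF f] T0_ne] .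
  have bound: "(1/8) * (\<Sum>n<N. (f n)^2) - F / 48 \<le> NT^2" for N
  proof -
    define a where "a = (\<Union>n<N. aa n)"
    have aA: "a \<in> T0_family c" unfolding a_def by (rule un)
    have "(\<Sum>\<alpha>\<in>a. (W f \<alpha>)^2) = (\<Sum>n<N. \<Sum>\<alpha>\<in>aa n. (W f \<alpha>)^2)"
      unfolding a_def by (rule sum.UNION_disjoint) (auto simp: aa_fin aa_disj)
    also have "\<dots> = (\<Sum>n<N. (f n)^2 * sqs (aa n) (zz n))"
      by (intro sum.cong refl) (simp add: W_on sqs_def power_mult_distrib sum_distrib_left)
    also have "\<dots> \<ge> (\<Sum>n<N. (f n)^2 * (1/4))"
      by (intro sum_mono mult_left_mono asq) auto
    finally have W0: "(\<Sum>n<N. (f n)^2 * (1/4)) \<le> (\<Sum>\<alpha>\<in>a. (W f \<alpha>)^2)" .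
    have W1: "(1/4) * (\<Sum>n<N. (f n)^2) \<le> (\<Sum>\<alpha>\<in>a. (W f \<alpha>)^2)"
    proof -
      have "(\<Sum>n<N. (f n)^2 * (1/4)) = (1/4) * (\<Sum>n<N. (f n)^2)" by (simp add: sum_distrib_right)
      then show ?thesis using W0 by linarith
    qed
    have R1: "(\<Sum>\<alpha>\<in>a. (R f \<alpha>)^2) \<le> F / 48" using B2[OF aA f] unfolding F_def by simp
    have "(\<Sum>\<alpha>\<in>a. (1/2) * (W f \<alpha>)^2 - (R f \<alpha>)^2) \<le> (\<Sum>\<alpha>\<in>a. (T f \<alpha>)^2)"
    proof (intro sum_mono)
      fix \<alpha>
      have "0 \<le> (W f \<alpha> + 2 * R f \<alpha>)^2" by simp
      then show "(1/2) * (W f \<alpha>)^2 - (R f \<alpha>)^2 \<le> (T f \<alpha>)^2"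
        using T_split[OF f] by (simp add: power2_eq_square algebra_simps)
    qed
    then have "(1/2) * (\<Sum>\<alpha>\<in>a. (W f \<alpha>)^2) - (\<Sum>\<alpha>\<in>a. (R f \<alpha>)^2) \<le> sqs a (T f)"
      unfolding sqs_def by (simp add: sum_subtractf sum_distrib_left)
    also have "\<dots> \<le> NT^2" unfolding NT_def by (rule normA_sqs[OF UB(1)[OF f] aA])
    finally show ?thesis using W1 R1 by linarith
  qed
  have lim: "(\<lambda>N. (1/8) * (\<Sum>n<N. (f n)^2) - F / 48) \<longlonglongrightarrow> (1/8) * F - F / 48"
    unfolding F_def by (intro tendsto_intros summable_LIMSEQ fs)
  have "(1/8) * F - F / 48 \<le> NT^2" using bound by (intro LIMSEQ_le_const2[OF lim]) auto
  moreover have "((1/4) * sqrt F)^2 = F / 16" using F0 by (simp add: power_mult_distrib power_divide)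
  ultimately have "((1/4) * sqrt F)^2 \<le> NT^2" using F0 by linarith
  then have "(1/4) * sqrt F \<le> NT" using NT0 by (rule power2_le_imp_le)
  then show ?thesis unfolding l2_norm_def NT_def F_def .
qed

lemma T_add: "f \<in> l2 \<Longrightarrow> g \<in> l2 \<Longrightarrow> T (\<lambda>n. f n + g n) = (\<lambda>\<alpha>. T f \<alpha> + T g \<alpha>)"
  unfolding T_def by (rule ext) (simp add: distrib_right suminf_add[OF sum_z sum_z])

lemma T_scale: "f \<in> l2 \<Longrightarrow> T (\<lambda>n. t * f n) = (\<lambda>\<alpha>. t * T f \<alpha>)"
  unfolding T_def by (rule ext) (simp add: mult.assoc suminf_mult[OF sum_z])

lemma split_sum:
  fixes u :: "nat \<Rightarrow> real"
  assumes "summable u"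
  shows "(\<Sum>n. u n) = (\<Sum>n<N. u n) + (\<Sum>n. if n < N then 0 else u n)"
    "summable (\<lambda>n. if n < N then 0 else u n)"
proof -
  have s1: "summable (\<lambda>n. if n < N then u n else 0)" by (rule summable_finite[of "{..<N}"]) auto
  have eq: "u = (\<lambda>n. (if n < N then u n else 0) + (if n < N then 0 else u n))" by auto
  have s2: "(\<lambda>n. if n < N then 0 else u n) = (\<lambda>n. u n - (if n < N then u n else 0))" by auto
  show s3: "summable (\<lambda>n. if n < N then 0 else u n)" unfolding s2 using summable_diff[OF assms s1] .
  have "(\<Sum>n. u n) = (\<Sum>n. if n < N then u n else 0) + (\<Sum>n. if n < N then 0 else u n)"
    by (subst eq) (rule suminf_add[OF s1 s3, symmetric])
  moreover have "(\<Sum>n. if n < N then u n else 0) = (\<Sum>n<N. if n < N then u n else 0)"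
    by (rule suminf_finite) auto
  ultimately show "(\<Sum>n. u n) = (\<Sum>n<N. u n) + (\<Sum>n. if n < N then 0 else u n)" by simp
qed

lemma tail_l2: "f \<in> l2 \<Longrightarrow> (\<lambda>n. if n < N then 0 else f n) \<in> l2"
  unfolding l2_def using split_sum(2)[of "\<lambda>n. (f n)^2" N] by (simp add: if_distrib[of "\<lambda>t. t^2"] cong: if_cong)

lemma P_Z: "(\<lambda>\<alpha>. \<Sum>n<N. f n * zz n \<alpha>) \<in> Z"
proof (induction N)
  case 0
  then show ?case using cs_zero[OF cs] by simp
next
  case (Suc N)
  have "(\<lambda>\<alpha>. (\<Sum>n<N. f n * zz n \<alpha>) + f N * zz N \<alpha>) \<in> Z"
    by (rule cs_add[OF cs Suc cs_scale[OF cs zZ]])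
  then show ?case by simp
qed

lemma T_tail: "f \<in> l2 \<Longrightarrow> (\<lambda>\<alpha>. T f \<alpha> - (\<Sum>n<N. f n * zz n \<alpha>)) = T (\<lambda>n. if n < N then 0 else f n)"
proof (rule ext)
  fix \<alpha> assume f: "f \<in> l2"
  have "T f \<alpha> = (\<Sum>n<N. f n * zz n \<alpha>) + (\<Sum>n. if n < N then 0 else f n * zz n \<alpha>)"
    unfolding T_def by (rule split_sum(1)[OF sum_z[OF f]])
  moreover have "T (\<lambda>n. if n < N then 0 else f n) \<alpha> = (\<Sum>n. if n < N then 0 else f n * zz n \<alpha>)"
    unfolding T_def by (intro suminf_cong) auto
  ultimately show "T f \<alpha> - (\<Sum>n<N. f n * zz n \<alpha>) = T (\<lambda>n. if n < N then 0 else f n) \<alpha>" by simp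
qed

lemma tail_small:
  assumes f: "f \<in> l2" and e: "e > 0"
  shows "\<exists>N. l2_norm (\<lambda>n. if n < N then 0 else f n) < e"
proof -
  have fs: "summable (\<lambda>n. (f n)^2)" using f unfolding l2_def by simp
  have "(\<lambda>N. \<Sum>n<N. (f n)^2) \<longlonglongrightarrow> (\<Sum>n. (f n)^2)" by (rule summable_LIMSEQ[OF fs])
  then obtain N where N: "dist (\<Sum>n<N. (f n)^2) (\<Sum>n. (f n)^2) < e^2"
    using e by (meson LIMSEQ_iff_nz dist_real_def zero_less_power order_refl)
  have "(\<Sum>n. ((if n < N then 0 else f n))^2) = (\<Sum>n. if n < N then 0 else (f n)^2)"
    by (intro suminf_cong) auto
  also have "\<dots> = (\<Sum>n. (f n)^2) - (\<Sum>n<N. (f n)^2)" using split_sum(1)[OF fs, of N] by simp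
  also have "\<dots> < e^2" using N unfolding dist_real_def by simp
  finally have "sqrt (\<Sum>n. ((if n < N then 0 else f n))^2) < sqrt (e^2)" by (rule real_sqrt_less_mono)
  then show ?thesis unfolding l2_norm_def using e by auto
qed

lemma T_Z:
  assumes f: "f \<in> l2"
  shows "T f \<in> Z"
proof -
  let ?A = "T0_family c"
  have approx: "\<exists>N. normA ?A (\<lambda>\<alpha>. T f \<alpha> - (\<Sum>n<N. f n * zz n \<alpha>)) < e \<and>
      normA_finite ?A (\<lambda>\<alpha>. T f \<alpha> - (\<Sum>n<N. f n * zz n \<alpha>))" if e: "e > 0" for e
  proof -
    obtain N where N: "l2_norm (\<lambda>n. if n < N then 0 else f n) < e / 2" using tail_small[OF f, of "e/2"] e by auto
    have "normA ?A (T (\<lambda>n. if n < N then 0 else f n)) \<le> 2 * l2_norm (\<lambda>n. if n < N then 0 else f n)"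
      by (rule UB(2)[OF tail_l2[OF f]])
    then show ?thesis using N T_tail[OF f, of N] UB(1)[OF tail_l2[OF f, of N]] by (intro exI[of _ N]) auto
  qed
  have TX: "T f \<in> XA ?A"
    unfolding XA_def
  proof (intro CollectI conjI allI impI)
    show "normA_finite ?A (T f)" by (rule UB(1)[OF f])
    fix e :: real assume e: "e > 0"
    obtain N where N: "normA ?A (\<lambda>\<alpha>. T f \<alpha> - (\<Sum>n<N. f n * zz n \<alpha>)) < e / 2"
      "normA_finite ?A (\<lambda>\<alpha>. T f \<alpha> - (\<Sum>n<N. f n * zz n \<alpha>))"
      using approx[of "e/2"] e by auto
    let ?P = "(\<lambda>\<alpha>. \<Sum>n<N. f n * zz n \<alpha>)"
    have PX: "?P \<in> XA ?A" using cs_XA[OF cs P_Z] .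
    obtain y where y: "y \<in> c00" "normA ?A (\<lambda>\<alpha>. ?P \<alpha> - y \<alpha>) < e / 2"
      using XA_approx[OF PX, of "e/2"] e by auto
    have b2: "normA_finite ?A (\<lambda>\<alpha>. ?P \<alpha> - y \<alpha>)"
      using normA_diff(2)[OF T0_ne XA_bounded[OF PX] c00_bounded[OF y(1)]] .
    have eq: "(\<lambda>\<alpha>. T f \<alpha> - y \<alpha>) = (\<lambda>\<alpha>. (T f \<alpha> - ?P \<alpha>) + (?P \<alpha> - y \<alpha>))" by auto
    have "normA ?A (\<lambda>\<alpha>. T f \<alpha> - y \<alpha>) \<le> normA ?A (\<lambda>\<alpha>. T f \<alpha> - ?P \<alpha>) + normA ?A (\<lambda>\<alpha>. ?P \<alpha> - y \<alpha>)"
      unfolding eq by (rule normA_add(1)[OF T0_ne N(2) b2])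
    then show "\<exists>y\<in>c00. normA ?A (\<lambda>\<alpha>. T f \<alpha> - y \<alpha>) < e" using N(1) y by (intro bexI[of _ y]) auto
  qed
  show ?thesis
  proof (rule cs_closed[OF cs TX])
    fix e :: real assume "e > 0"
    then obtain N where "normA ?A (\<lambda>\<alpha>. T f \<alpha> - (\<Sum>n<N. f n * zz n \<alpha>)) < e" using approx by blast
    then show "\<exists>z\<in>Z. normA ?A (\<lambda>\<alpha>. T f \<alpha> - z \<alpha>) < e"
      using P_Z[of f N] by (intro bexI[where x="\<lambda>\<alpha>. \<Sum>n<N. f n * zz n \<alpha>"]) auto
  qed
qed

lemma result: "contains_l2 (T0_family c) Z"
proof -
  have 1: "T ` l2 \<subseteq> Z" using T_Z by auto
  have 2: "\<forall>f\<in>l2. \<forall>g\<in>l2. T (\<lambda>n. f n + g n) = (\<lambda>\<alpha>. T f \<alpha> + T g \<alpha>)" using T_add by blast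
  have 3: "\<forall>t::real. \<forall>f\<in>l2. T (\<lambda>n. t * f n) = (\<lambda>\<alpha>. t * T f \<alpha>)" using T_scale by blast
  have 4: "\<forall>f\<in>l2. 1/4 * l2_norm f \<le> normA (T0_family c) (T f) \<and> normA (T0_family c) (T f) \<le> 2 * l2_norm f"
    using LB UB(2) by blast
  show ?thesis unfolding contains_l2_def
    apply (rule exI[of _ T])
    apply (rule exI[of _ "1/4::real"])
    apply (rule exI[of _ "2::real"])
    using 1 2 3 4 by simp
qed

end

theorem proposition4p4:
  fixes c :: "'a::wellorder set \<Rightarrow> 'i::zero_neq_one \<times> 'j"
    and I :: "'i set" and J :: "'j set"
    and Z :: "('a \<Rightarrow> real) set"
  assumes "is_omega1 TYPE('a)"
    and "strong_T_coloring c I J"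
    and "closed_subspace_XA (T0_family c) Z"
    and "\<not> separable_XA (T0_family c) Z"
  shows "contains_l2 (T0_family c) Z"
proof -
  obtain z a S where H: "(\<forall>(\<xi>::'a) k. PB c Z (S \<xi>) (dlt k) (z \<xi> k) (a \<xi> k)) \<and>
     (\<forall>\<eta> \<xi> k. \<eta> < \<xi> \<longrightarrow> {\<alpha>. z \<eta> k \<alpha> \<noteq> 0} \<subseteq> S \<xi>)"
    using construction[OF assms(1,3,4)] by (elim exE) (erule that)
  have P: "\<And>\<xi> k. PB c Z (S \<xi>) (dlt k) (z \<xi> k) (a \<xi> k)" using H by blast
  have sup: "\<And>\<eta> \<xi> k. \<eta> < \<xi> \<Longrightarrow> {\<alpha>. z \<eta> k \<alpha> \<noteq> 0} \<subseteq> S \<xi>" using H by blast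
  have aA: "a \<xi> k \<in> T0_family c \<and> a \<xi> k \<noteq> {}" for \<xi> k using P[of \<xi> k] unfolding PB_def by auto
  have disj0: "a \<eta> l \<inter> a \<xi> k = {}" if "\<eta> < \<xi>" for \<eta> \<xi> k l
  proof -
    have "a \<eta> l \<subseteq> S \<xi>" using P[of \<eta> l] sup[OF that, of l] unfolding PB_def by blast
    moreover have "a \<xi> k \<inter> S \<xi> = {}" using P[of \<xi> k] unfolding PB_def by blast
    ultimately show ?thesis by blast
  qed
  have disj: "a \<xi> k \<inter> a \<eta> l = {}" if "\<xi> \<noteq> \<eta>" for \<xi> \<eta> k l
  proof (cases "\<xi> < \<eta>")
    case True
    then show ?thesis using disj0 by blast
  next
    case False
    then have "\<eta> < \<xi>" using that by (simp add: not_less_iff_gr_or_eq)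
    then show ?thesis using disj0[of \<eta> \<xi> l k] by blast
  qed
  obtain s where s: "strict_mono s" "\<And>N. (\<Union>n<N. a (s n) n) \<in> T0_family c"
    using comb[where c=c and a=a, OF assms(1,2) aA disj] by blast
  interpret L: seqL c Z "\<lambda>n. z (s n) n" "\<lambda>n. a (s n) n" "\<lambda>n. S (s n)"
  proof
    show "closed_subspace_XA (T0_family c) Z" by (rule assms(3))
    fix n
    show "z (s n) n \<in> Z" "normA (T0_family c) (z (s n) n) = 1"
      "a (s n) n \<inter> S (s n) = {}" "a (s n) n \<subseteq> {\<alpha>. z (s n) n \<alpha> \<noteq> 0}"
      "1/4 \<le> sqs (a (s n) n) (z (s n) n)"
      using P[of "s n" n] unfolding PB_def by auto
    show "L2_set (z (s n) n) (b \<inter> S (s n)) \<le> dlt n" if "b \<in> T0_family c" for b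
      using P[of "s n" n] that unfolding PB_def by auto
    show "(\<Union>n<N. a (s n) n) \<in> T0_family c" for N by (rule s(2))
    fix m assume "m < n"
    then have "s m < s n" using s(1) by (simp add: strict_mono_less)
    then show "{\<alpha>. z (s m) m \<alpha> \<noteq> 0} \<subseteq> S (s n)" by (rule sup)
  qed
  show ?thesis by (rule L.result)
qed

end
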